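(* Let $G\in\mathcal{RG}^{{\underline{\kappa}},*}_{g,n}$ be a non-bipartite ribbon graph. Then: (1) $\operatorname{vp}_G:\mathbb R^{E(G)}\to\mathbb R^n$ is surjective; (2) for every $\underline b\in\mathbb R^n$, $\operatorname{vp}_G^{-1}(\underline b)$ is an affine subspace of $\mathbb R^{E(G)}$ of dimension $|E(G)|-|V(G)|$; (3) regarding the coordinates $w(e)$ as affine functions on $\operatorname{vp}_G^{-1}(\underline b)$, for every $e\in S(G)$ the function $w(e)$ is constant equal to $f_e(\underline b)$, and for every $e\in E(G)\setminus S(G)$ it is non-constant; (4) if $\underline b\in\mathbb Z^n$ and $b_1+\dots+b_n\equiv0\pmod 2$, then $\operatorname{vp}_G^{-1}(\underline b)\cap\mathbb Z^{E(G)}$ is a lattice in $\operatorname{vp}_G^{-1}(\underline b)$; otherwise it is empty.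
   Context: Ribbon graph: finite graph (loops, multiple edges allowed) with cyclic order of half-edges at each vertex, determining faces and genus. For ${\underline{\kappa}}$ a partition with odd parts, $\mathcal{RG}^{{\underline{\kappa}},*}_{g,n}$: isomorphism classes of connected ribbon graphs of genus $g$ with $n$ labeled vertices and face degrees ${\underline{\kappa}}$. Weight function $w:E(G)\to\mathbb R$; $\operatorname{vp}_G(w)_v=\sum_e a_{ve}w(e)$, $a_{ve}=2$ for a loop at $v$, $1$ for a non-loop edge at $v$, $0$ otherwise. For non-bipartite $G$, $e$ is static if some component of $G-e$ is bipartite; $S(G)$ the static edges. For $e\in S(G)$, $f_e$ is the linear function on $\mathbb R^n$: if $e$ is a bridge, with $I,J$ the labels of the two color classes of the bipartite component of $G-e$, $e$ incident to the class $I$, $f_e(\underline b)=\sum_{I}b_i-\sum_Jb_j$; if $e$ is not a bridge ($G-e$ connected bipartite, both endpoints of $e$ in class $I$), $f_e(\underline b)=\tfrac12(\sum_Ib_i-\sum_Jb_j)$. *)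

theory Defs
  imports "HOL-Analysis.Analysis" "HOL-Library.Multiset"
begin

text \<open>Edges are the elements of a finite type 'e; the half-edges
(darts) are the pairs (e, s) with s :: bool, and the edge involution swaps the two
halves of an edge.  The cyclic orders at the vertices are given by a permutation
rho of the darts; the vertices are the rho-orbits, labelled by the elements of
a finite type 'v (so n = CARD('v)) via the map vert.\<close>

definition alpha :: "'e \<times> bool \<Rightarrow> 'e \<times> bool" where
  "alpha d = (fst d, \<not> snd d)"

definition ends :: "('e \<times> bool \<Rightarrow> 'v) \<Rightarrow> 'e \<Rightarrow> 'v \<times> 'v" where
  "ends vert e = (vert (e, True), vert (e, False))"

definition ribbon_vertices :: "('e \<times> bool \<Rightarrow> 'e \<times> bool) \<Rightarrow> ('e \<times> bool \<Rightarrow> 'v) \<Rightarrow> bool" where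
  "ribbon_vertices rho vert \<longleftrightarrow> bij rho \<and> surj vert \<and>
     (\<forall>d d'. vert d = vert d' \<longleftrightarrow> (\<exists>k. (rho ^^ k) d = d'))"

definition face_orbit :: "('e \<times> bool \<Rightarrow> 'e \<times> bool) \<Rightarrow> 'e \<times> bool \<Rightarrow> ('e \<times> bool) set" where
  "face_orbit rho d = {((rho \<circ> alpha) ^^ k) d | k. True}"

definition faces :: "('e \<times> bool \<Rightarrow> 'e \<times> bool) \<Rightarrow> ('e \<times> bool) set set" where
  "faces rho = range (face_orbit rho)"

definition face_degrees :: "('e \<times> bool \<Rightarrow> 'e \<times> bool) \<Rightarrow> nat multiset" where
  "face_degrees rho = image_mset card (mset_set (faces rho))"

definition edge_rel :: "('e \<times> bool \<Rightarrow> 'v) \<Rightarrow> 'e set \<Rightarrow> ('v \<times> 'v) set" where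
  "edge_rel vert F = {(x, y). \<exists>e\<in>F. (x, y) = ends vert e \<or> (y, x) = ends vert e}"

definition graph_connected :: "('e \<times> bool \<Rightarrow> 'v) \<Rightarrow> bool" where
  "graph_connected vert \<longleftrightarrow> (\<forall>u v. (u, v) \<in> (edge_rel vert UNIV)\<^sup>*)"

definition is_component :: "('e \<times> bool \<Rightarrow> 'v) \<Rightarrow> 'e set \<Rightarrow> 'v set \<Rightarrow> bool" where
  "is_component vert F C \<longleftrightarrow> (\<exists>u. C = {v. (u, v) \<in> (edge_rel vert F)\<^sup>*})"

definition proper_2col :: "('e \<times> bool \<Rightarrow> 'v) \<Rightarrow> 'e set \<Rightarrow> 'v set \<Rightarrow> 'v set \<Rightarrow> 'v set \<Rightarrow> bool" where
  "proper_2col vert F C I J \<longleftrightarrow> I \<union> J = C \<and> I \<inter> J = {} \<and>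
     (\<forall>e\<in>F. fst (ends vert e) \<in> C \<or> snd (ends vert e) \<in> C \<longrightarrow>
        (fst (ends vert e) \<in> I \<and> snd (ends vert e) \<in> J) \<or>
        (fst (ends vert e) \<in> J \<and> snd (ends vert e) \<in> I))"

definition bipartite :: "('e \<times> bool \<Rightarrow> 'v) \<Rightarrow> bool" where
  "bipartite vert \<longleftrightarrow> (\<exists>I J. proper_2col vert UNIV UNIV I J)"

definition static_edge :: "('e \<times> bool \<Rightarrow> 'v) \<Rightarrow> 'e \<Rightarrow> bool" where
  "static_edge vert e \<longleftrightarrow>
     (\<exists>C I J. is_component vert (- {e}) C \<and> proper_2col vert (- {e}) C I J)"

definition static_data :: "('e \<times> bool \<Rightarrow> 'v) \<Rightarrow> 'e \<Rightarrow> 'v set \<Rightarrow> 'v set \<Rightarrow> 'v set \<Rightarrow> bool" where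
  "static_data vert e C I J \<longleftrightarrow> is_component vert (- {e}) C \<and> proper_2col vert (- {e}) C I J \<and>
     (fst (ends vert e) \<in> I \<or> snd (ends vert e) \<in> I)"

text \<open>f_e: bridge case when C is not everything (G - e disconnected), otherwise
G - e is connected bipartite and the value is halved.\<close>
definition f_e :: "('e \<times> bool \<Rightarrow> 'v) \<Rightarrow> 'e \<Rightarrow> real ^ 'v \<Rightarrow> real" where
  "f_e vert e b = (let (C, I, J) = (SOME (C, I, J). static_data vert e C I J) in
     if C = UNIV then ((\<Sum>i\<in>I. b $ i) - (\<Sum>j\<in>J. b $ j)) / 2
     else (\<Sum>i\<in>I. b $ i) - (\<Sum>j\<in>J. b $ j))"

definition vp :: "('e::finite \<times> bool \<Rightarrow> 'v) \<Rightarrow> real ^ 'e \<Rightarrow> real ^ 'v" where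
  "vp vert w = (\<chi> v. \<Sum>e\<in>UNIV. real (card {s. vert (e, s) = v}) * w $ e)"

definition in_RG :: "nat multiset \<Rightarrow> nat \<Rightarrow> ('e::finite \<times> bool \<Rightarrow> 'e \<times> bool) \<Rightarrow> ('e \<times> bool \<Rightarrow> 'v::finite) \<Rightarrow> bool" where
  "in_RG kappa g rho vert \<longleftrightarrow> ribbon_vertices rho vert \<and> graph_connected vert \<and>
     face_degrees rho = kappa \<and>
     int CARD('v) - int CARD('e) + int (card (faces rho)) = 2 - 2 * int g"

definition int_points :: "(real ^ 'e) set" where
  "int_points = {w. \<forall>e. w $ e \<in> \<int>}"

definition lattice_in :: "'a::euclidean_space set \<Rightarrow> 'a set \<Rightarrow> bool" where
  "lattice_in L A \<longleftrightarrow> (\<exists>x0 B. x0 \<in> A \<and> finite B \<and> independent B \<and>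
     span B = (\<lambda>y. y - x0) ` A \<and>
     L = {x0 + (\<Sum>v\<in>B. of_int (c v) *\<^sub>R v) | c. True})"

end

theory Submission
  imports Defs
begin

definition vpT :: "('e::finite \<times> bool \<Rightarrow> 'v::finite) \<Rightarrow> real ^ 'v \<Rightarrow> real ^ 'e" where
  "vpT vert c = (\<chi> e. c $ vert (e, True) + c $ vert (e, False))"

lemma card_half:
  "real (card {s. vert (e, s) = v}) = (if vert (e,True) = v then 1 else 0) + (if vert (e,False) = v then 1 else 0)"
proof -
  have "{s. vert (e, s) = v} = (if vert (e,True) = v then {True} else {}) \<union> (if vert (e,False) = v then {False} else {})"
    by (auto split: if_splits) (metis (full_types))+
  then show ?thesis by (auto split: if_splits)
qed

lemma sum_card_half:
  fixes f :: "'v::finite \<Rightarrow> real"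
  shows "(\<Sum>v\<in>UNIV. f v * real (card {s. vert (e, s) = v})) = f (vert(e,True)) + f (vert(e,False))"
  by (simp add: card_half distrib_left sum.distrib if_distrib[of "\<lambda>x. f _ * x"] sum.delta' cong: if_cong)

lemma vp_comp: "vp vert w $ v = (\<Sum>e\<in>UNIV. real (card {s. vert (e, s) = v}) * w $ e)"
  by (simp add: vp_def)

lemma sum_vp:
  fixes g :: "'v::finite \<Rightarrow> real" and vert :: "'e::finite \<times> bool \<Rightarrow> 'v"
  shows "(\<Sum>v\<in>UNIV. g v * vp vert w $ v) = (\<Sum>e\<in>UNIV. w$e * (g (vert(e,True)) + g (vert(e,False))))"
proof -
  have "(\<Sum>v\<in>UNIV. g v * vp vert w $ v) = (\<Sum>v\<in>UNIV. \<Sum>e\<in>UNIV. w$e * (g v * real (card {s. vert (e, s) = v})))"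
    by (simp add: vp_comp sum_distrib_left mult_ac)
  also have "\<dots> = (\<Sum>e\<in>UNIV. w$e * (\<Sum>v\<in>UNIV. g v * real (card {s. vert (e, s) = v})))"
    by (subst sum.swap) (simp add: sum_distrib_left)
  also have "\<dots> = (\<Sum>e\<in>UNIV. w$e * (g (vert(e,True)) + g (vert(e,False))))"
    by (simp add: sum_card_half)
  finally show ?thesis .
qed

lemma inner_vp: "c \<bullet> vp vert w = vpT vert c \<bullet> w"
  unfolding inner_vec_def
  by (simp add: sum_vp vpT_def mult_ac)

lemma linear_vp: "linear (vp vert)"
  by (rule linearI) (simp_all add: vec_eq_iff vp_def sum.distrib sum_distrib_left algebra_simps)

lemma linear_vpT: "linear (vpT vert)"
  by (rule linearI) (simp_all add: vec_eq_iff vpT_def algebra_simps)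

lemma edge_rel_iff: "(x, y) \<in> edge_rel vert F \<longleftrightarrow> (\<exists>e\<in>F. (x = vert (e,True) \<and> y = vert (e,False)) \<or> (y = vert (e,True) \<and> x = vert (e,False)))"
  by (auto simp: edge_rel_def ends_def)

lemma rtr_sign:
  fixes c :: "'v \<Rightarrow> real"
  assumes "\<And>e. e \<in> F \<Longrightarrow> c (vert (e,True)) + c (vert (e,False)) = 0"
    and "(u, v) \<in> (edge_rel vert F)\<^sup>*"
  shows "c v = c u \<or> c v = - c u"
  using assms(2)
proof (induction rule: rtrancl_induct)
  case base then show ?case by simp
next
  case (step y z)
  then have "c z = - c y" using assms(1) by (auto simp: edge_rel_iff) (metis add.commute add_eq_0_iff)+
  then show ?case using step.IH by auto
qed

lemma closed_univ:
  assumes "graph_connected vert" "u \<in> C" "\<And>e. vert (e,True) \<in> C \<longleftrightarrow> vert (e,False) \<in> C"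
  shows "C = UNIV"
proof -
  { fix v
    have "(u, v) \<in> (edge_rel vert UNIV)\<^sup>*" using assms(1) by (simp add: graph_connected_def)
    then have "v \<in> C"
    proof (induction rule: rtrancl_induct)
      case base then show ?case using assms(2) by simp
    next
      case (step y z) then show ?case using assms(3) by (auto simp: edge_rel_iff)
    qed }
  then show ?thesis by auto
qed

lemma zero_from_nonbip:
  fixes c :: "'v \<Rightarrow> real"
  assumes conn: "graph_connected vert" and nb: "\<not> bipartite vert"
    and h: "\<And>e. c (vert (e,True)) + c (vert (e,False)) = 0"
  shows "c v = 0"
proof (rule ccontr)
  assume "c v \<noteq> 0"
  define I where "I = {x. c x = c v}"
  define J where "J = {x. c x = - c v}"
  have cov: "x \<in> I \<union> J" for x
    using rtr_sign[of UNIV c vert v x] h conn by (auto simp: graph_connected_def I_def J_def)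
  have "proper_2col vert UNIV UNIV I J"
    unfolding proper_2col_def ends_def
  proof (intro conjI ballI impI)
    show "I \<union> J = UNIV" using cov by auto
    show "I \<inter> J = {}" using \<open>c v \<noteq> 0\<close> by (auto simp: I_def J_def)
  next
    fix e
    have "c (vert (e,False)) = - c (vert (e,True))" using h[of e] by linarith
    then show "fst (vert (e, True), vert (e, False)) \<in> I \<and> snd (vert (e, True), vert (e, False)) \<in> J \<or>
         fst (vert (e, True), vert (e, False)) \<in> J \<and> snd (vert (e, True), vert (e, False)) \<in> I"
      using cov[of "vert (e,True)"] by (auto simp: I_def J_def)
  qed
  then show False using nb by (auto simp: bipartite_def)
qed


lemma vpT_zero:
  assumes conn: "graph_connected vert" and nb: "\<not> bipartite vert" and "vpT vert c = 0"
  shows "c = 0"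
proof -
  have "\<And>e. c $ vert (e,True) + c $ vert (e,False) = 0"
    using assms(3) by (simp add: vpT_def vec_eq_iff)
  then have "\<And>v. c $ v = 0" using zero_from_nonbip[OF conn nb, of "\<lambda>v. c $ v"] by blast
  then show ?thesis by (simp add: vec_eq_iff)
qed

lemma ker_eq: "vp vert -` {0} = (range (vpT vert))\<^sup>\<bottom>"
proof -
  have "vp vert z = 0 \<longleftrightarrow> (\<forall>c. vpT vert c \<bullet> z = 0)" for z
    by (metis inner_vp inner_zero_right inner_eq_zero_iff)
  then show ?thesis by (auto simp: orthogonal_comp_def orthogonal_def)
qed

lemma subspace_ker: "subspace (vp vert -` {0})"
  using linear_vp[of vert] unfolding subspace_def by (auto simp: linear_add linear_scale linear_0)

lemma surj_vp:
  assumes conn: "graph_connected vert" and nb: "\<not> bipartite vert"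
  shows "surj (vp vert)"
proof -
  let ?U = "range (vp vert)"
  have sU: "subspace ?U" using linear_vp[of vert] by (simp add: linear_subspace_image)
  have "?U\<^sup>\<bottom> = {0}"
  proof -
    { fix z assume "z \<in> ?U\<^sup>\<bottom>"
      then have "\<forall>w. vpT vert z \<bullet> w = 0"
        by (auto simp: orthogonal_comp_def orthogonal_def inner_vp inner_commute)
      then have "vpT vert z = 0" by (metis inner_eq_zero_iff)
      then have "z = 0" using vpT_zero[OF conn nb] by blast }
    then show ?thesis by (auto simp: orthogonal_comp_def orthogonal_def)
  qed
  then have "?U = UNIV" using orthogonal_comp_self[OF sU] by simp
  then show ?thesis .
qed

lemma dim_ker:
  fixes vert :: "'e::finite \<times> bool \<Rightarrow> 'v::finite"
  assumes conn: "graph_connected vert" and nb: "\<not> bipartite vert"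
  shows "dim (vp vert -` {0}) + CARD('v) = CARD('e)"
proof -
  have sA: "subspace (range (vpT vert))" using linear_vpT[of vert] by (simp add: linear_subspace_image)
  have "dim {y \<in> UNIV. \<forall>x \<in> range (vpT vert). orthogonal x y} + dim (range (vpT vert)) = dim (UNIV :: (real^'e) set)"
    by (rule dim_subspace_orthogonal_to_vectors[OF sA subspace_UNIV]) simp
  moreover have "{y \<in> UNIV. \<forall>x \<in> range (vpT vert). orthogonal x y} = vp vert -` {0}"
    by (simp add: ker_eq orthogonal_comp_def)
  moreover have "dim (range (vpT vert)) = dim (UNIV :: (real^'v) set)"
  proof (rule dim_image_eq[OF linear_vpT])
    show "inj_on (vpT vert) (span UNIV)"
      using vpT_zero[OF conn nb] linear_vpT[of vert] by (metis linear_inj_iff_eq_0 inj_on_subset subset_UNIV)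
  qed
  ultimately show ?thesis by simp
qed


lemma comp_closed:
  assumes "C = {v. (u, v) \<in> (edge_rel vert F)\<^sup>*}" "e' \<in> F"
  shows "vert (e',True) \<in> C \<longleftrightarrow> vert (e',False) \<in> C"
proof -
  have "(vert (e',True), vert (e',False)) \<in> edge_rel vert F" "(vert (e',False), vert (e',True)) \<in> edge_rel vert F"
    using assms(2) by (auto simp: edge_rel_iff)
  then show ?thesis using assms(1) by (auto intro: rtrancl_into_rtrancl)
qed

lemma nonstatic_nonconst:
  assumes conn: "graph_connected vert" and nb: "\<not> bipartite vert"
    and ns: "\<not> static_edge vert e"
  shows "\<not> (\<exists>c. \<forall>w\<in>vp vert -` {b}. w $ e = c)"
proof
  assume "\<exists>c. \<forall>w\<in>vp vert -` {b}. w $ e = c"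
  then obtain c0 where c0: "\<And>w. vp vert w = b \<Longrightarrow> w $ e = c0" by auto
  obtain w0 where w0: "vp vert w0 = b" using surj_vp[OF conn nb] by (metis surjD)
  have kz: "z $ e = 0" if "vp vert z = 0" for z
  proof -
    have "vp vert (w0 + z) = b" using w0 that linear_vp[of vert] by (simp add: linear_add)
    then have "(w0 + z) $ e = w0 $ e" using c0 w0 by metis
    then show ?thesis by simp
  qed
  have "axis e 1 \<in> (vp vert -` {0})\<^sup>\<bottom>"
    using kz by (auto simp: orthogonal_comp_def orthogonal_def inner_axis)
  also have "\<dots> = range (vpT vert)"
    unfolding ker_eq by (rule orthogonal_comp_self) (simp add: linear_vpT linear_subspace_image)
  finally obtain c where c: "axis e 1 = vpT vert c" by auto
  have hc: "c $ vert (e',True) + c $ vert (e',False) = (if e' = e then 1 else 0)" for e'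
  proof -
    have "axis e 1 $ e' = vpT vert c $ e'" using c by simp
    then show ?thesis by (simp add: vpT_def axis_def)
  qed
  define cf where "cf v = c $ v" for v
  define u where "u = (if cf (vert (e,True)) \<noteq> 0 then vert (e,True) else vert (e,False))"
  have cu: "cf u \<noteq> 0" using hc[of e] by (auto simp: u_def cf_def)
  define C where "C = {v. (u, v) \<in> (edge_rel vert (- {e}))\<^sup>*}"
  define I where "I = {v\<in>C. cf v = cf u}"
  define J where "J = {v\<in>C. cf v = - cf u}"
  have h0: "cf (vert (e',True)) + cf (vert (e',False)) = 0" if "e' \<in> - {e}" for e'
    using hc[of e'] that by (simp add: cf_def)
  have "is_component vert (- {e}) C" unfolding is_component_def C_def by blast
  moreover have "proper_2col vert (- {e}) C I J"
    unfolding proper_2col_def ends_def fst_conv snd_conv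
  proof (intro conjI ballI impI)
    show "I \<union> J = C" using rtr_sign[of "- {e}" cf vert, OF h0] by (auto simp: I_def J_def C_def)
    show "I \<inter> J = {}" using cu by (auto simp: I_def J_def)
  next
    fix e' assume e': "e' \<in> - {e}" and "vert (e', True) \<in> C \<or> vert (e', False) \<in> C"
    then have both: "vert (e', True) \<in> C" "vert (e', False) \<in> C"
      using comp_closed[OF C_def e'] by auto
    have "cf (vert (e',False)) = - cf (vert (e',True))" using h0[OF e'] by linarith
    moreover have "vert (e', True) \<in> I \<union> J" using both rtr_sign[of "- {e}" cf vert, OF h0] by (auto simp: I_def J_def C_def)
    ultimately show "vert (e', True) \<in> I \<and> vert (e', False) \<in> J \<or> vert (e', True) \<in> J \<and> vert (e', False) \<in> I"
      using both by (auto simp: I_def J_def)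
  qed
  ultimately have "static_edge vert e" unfolding static_edge_def by blast
  then show False using ns by blast
qed

lemma static_data_ex:
  assumes conn: "graph_connected vert" and st: "static_edge vert e"
  shows "\<exists>C I J. static_data vert e C I J"
proof -
  obtain C I J where comp: "is_component vert (- {e}) C" and col: "proper_2col vert (- {e}) C I J"
    using st by (auto simp: static_edge_def)
  obtain u where C: "C = {v. (u, v) \<in> (edge_rel vert (- {e}))\<^sup>*}" using comp by (auto simp: is_component_def)
  have "vert (e,True) \<in> C \<or> vert (e,False) \<in> C"
  proof (rule ccontr)
    assume nn: "\<not> ?thesis"
    have "C = UNIV"
    proof (rule closed_univ[OF conn])
      show "u \<in> C" using C by simp
      fix e' show "vert (e', True) \<in> C \<longleftrightarrow> vert (e', False) \<in> C"
        using nn comp_closed[OF C, of e'] by (cases "e' = e") auto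
    qed
    then show False using nn by auto
  qed
  then have "vert (e,True) \<in> I \<union> J \<or> vert (e,False) \<in> I \<union> J" using col by (simp add: proper_2col_def)
  moreover have "proper_2col vert (- {e}) C J I" using col by (auto simp: proper_2col_def)
  ultimately show ?thesis using comp col unfolding static_data_def ends_def by auto
qed

lemma sum_sign:
  fixes b :: "'v::finite \<Rightarrow> real"
  assumes "I \<inter> J = {}"
  shows "(\<Sum>v\<in>UNIV. (if v \<in> I then 1 else if v \<in> J then -1 else 0) * b v) = sum b I - sum b J"
proof -
  have "(\<Sum>v\<in>UNIV. (if v \<in> I then 1 else if v \<in> J then -1 else 0) * b v)
      = (\<Sum>v\<in>UNIV. (if v \<in> I then b v else 0)) - (\<Sum>v\<in>UNIV. (if v \<in> J then b v else 0))"
    using assms by (subst sum_subtractf[symmetric]) (rule sum.cong, auto)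
  also have "\<dots> = sum b I - sum b J"
    by (simp add: sum.inter_restrict[symmetric])
  finally show ?thesis .
qed

lemma static_const:
  assumes conn: "graph_connected vert" and nb: "\<not> bipartite vert"
    and st: "static_edge vert e" and wb: "vp vert w = b"
  shows "w $ e = f_e vert e b"
proof -
  obtain C I J where eq: "(SOME (C, I, J). static_data vert e C I J) = (C, I, J)"
    by (metis prod_cases3)
  have "\<exists>x. (case x of (C, I, J) \<Rightarrow> static_data vert e C I J)"
    using static_data_ex[OF conn st] by auto
  from someI_ex[OF this] have sd: "static_data vert e C I J" by (simp add: eq)
  have fe: "f_e vert e b = (if C = UNIV then ((\<Sum>i\<in>I. b $ i) - (\<Sum>j\<in>J. b $ j)) / 2
     else (\<Sum>i\<in>I. b $ i) - (\<Sum>j\<in>J. b $ j))"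
    by (simp add: f_e_def eq)
  from sd have comp: "is_component vert (- {e}) C" and col: "proper_2col vert (- {e}) C I J"
    and inc: "vert (e,True) \<in> I \<or> vert (e,False) \<in> I"
    by (auto simp: static_data_def ends_def)
  obtain u where C: "C = {v. (u, v) \<in> (edge_rel vert (- {e}))\<^sup>*}" using comp by (auto simp: is_component_def)
  have IJ: "I \<union> J = C" "I \<inter> J = {}" using col by (auto simp: proper_2col_def)
  have col2: "\<And>e'. e' \<noteq> e \<Longrightarrow> vert (e',True) \<in> C \<or> vert (e',False) \<in> C \<Longrightarrow>
      (vert (e',True) \<in> I \<and> vert (e',False) \<in> J) \<or> (vert (e',True) \<in> J \<and> vert (e',False) \<in> I)"
    using col by (auto simp: proper_2col_def ends_def)
  define g where "g v = (if v \<in> I then 1 else if v \<in> J then -1 else (0::real))" for v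
  have g0: "g (vert (e',True)) + g (vert (e',False)) = 0" if "e' \<noteq> e" for e'
  proof (cases "vert (e',True) \<in> C \<or> vert (e',False) \<in> C")
    case True then show ?thesis using col2[OF that True] IJ by (auto simp: g_def)
  next
    case False then show ?thesis using IJ by (auto simp: g_def)
  qed
  have "(\<Sum>i\<in>I. b $ i) - (\<Sum>j\<in>J. b $ j) = (\<Sum>v\<in>UNIV. g v * b $ v)"
    using sum_sign[OF IJ(2), of "\<lambda>v. b $ v"] by (simp add: g_def)
  also have "\<dots> = (\<Sum>e'\<in>UNIV. w$e' * (g (vert(e',True)) + g (vert(e',False))))"
    using sum_vp[of g vert w] wb by simp
  also have "\<dots> = (\<Sum>e'\<in>UNIV. if e' = e then w$e * (g (vert(e,True)) + g (vert(e,False))) else 0)"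
    by (rule sum.cong) (auto simp: g0)
  also have "\<dots> = w$e * (g (vert(e,True)) + g (vert(e,False)))" by simp
  finally have S: "(\<Sum>i\<in>I. b $ i) - (\<Sum>j\<in>J. b $ j) = w$e * (g (vert(e,True)) + g (vert(e,False)))" .
  show ?thesis
  proof (cases "C = UNIV")
    case True
    have both: "vert (e,True) \<in> I \<and> vert (e,False) \<in> I"
    proof (rule ccontr)
      assume nboth: "\<not> ?thesis"
      have "proper_2col vert UNIV UNIV I J"
        unfolding proper_2col_def ends_def fst_conv snd_conv
      proof (intro conjI ballI impI)
        show "I \<union> J = UNIV" "I \<inter> J = {}" using IJ True by auto
      next
        fix e' assume "e' \<in> (UNIV :: 'a set)"
        show "vert (e', True) \<in> I \<and> vert (e', False) \<in> J \<or> vert (e', True) \<in> J \<and> vert (e', False) \<in> I"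
        proof (cases "e' = e")
          case True then show ?thesis using nboth inc IJ \<open>C = UNIV\<close> by auto
        next
          case False then show ?thesis using col2[of e'] \<open>C = UNIV\<close> by auto
        qed
      qed
      then show False using nb by (auto simp: bipartite_def)
    qed
    then have "g (vert(e,True)) + g (vert(e,False)) = 2" by (simp add: g_def)
    then show ?thesis using S fe True by simp
  next
    case False
    have "\<not> (vert (e,True) \<in> C \<and> vert (e,False) \<in> C)"
    proof
      assume bb: "vert (e,True) \<in> C \<and> vert (e,False) \<in> C"
      have "C = UNIV"
      proof (rule closed_univ[OF conn])
        show "u \<in> C" using C by simp
        fix e' show "vert (e', True) \<in> C \<longleftrightarrow> vert (e', False) \<in> C"
          using bb comp_closed[OF C, of e'] by (cases "e' = e") auto
      qed
      then show False using False by simp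
    qed
    then have "g (vert(e,True)) + g (vert(e,False)) = 1" using inc IJ by (auto simp: g_def)
    then show ?thesis using S fe False by simp
  qed
qed


lemma grp_mult:
  fixes L :: "'a::real_vector set"
  assumes z: "0 \<in> L" and d: "\<forall>x\<in>L. \<forall>y\<in>L. x - y \<in> L" and v: "v \<in> L"
  shows "of_int q *\<^sub>R v \<in> L"
proof -
  have n: "of_nat n *\<^sub>R v \<in> L" for n
  proof (induction n)
    case 0 then show ?case using z by simp
  next
    case (Suc n)
    have "0 - v \<in> L" using d z v by blast
    then have "of_nat n *\<^sub>R v - (0 - v) \<in> L" using d Suc by blast
    then show ?case by (simp add: algebra_simps)
  qed
  show ?thesis
  proof (cases "q \<ge> 0")
    case True
    then have "q = int (nat q)" by simp
    then show ?thesis using n[of "nat q"] by (metis of_int_of_nat_eq)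
  next
    case False
    then have "q = - int (nat (-q))" by simp
    moreover have "0 - of_nat (nat (-q)) *\<^sub>R v \<in> L" using n d z by blast
    ultimately show ?thesis by (metis diff_0 of_int_minus of_int_of_nat_eq scaleR_minus_left)
  qed
qed

lemma grp_add:
  fixes L :: "'a::real_vector set"
  assumes z: "0 \<in> L" and d: "\<forall>x\<in>L. \<forall>y\<in>L. x - y \<in> L" and "x \<in> L" "y \<in> L"
  shows "x + y \<in> L"
proof -
  have "0 - y \<in> L" using assms by blast
  then have "x - (0 - y) \<in> L" using assms by blast
  then show ?thesis by simp
qed

lemma grp_sum:
  fixes L :: "'a::real_vector set"
  assumes z: "0 \<in> L" and d: "\<forall>x\<in>L. \<forall>y\<in>L. x - y \<in> L" and "\<And>u. u \<in> A \<Longrightarrow> f u \<in> L"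
  shows "sum f A \<in> L"
  using assms(3)
proof (induction A rule: infinite_finite_induct)
  case (insert x F) then show ?case using grp_add[OF z d] by simp
qed (use z in auto)

lemma lattice_basis_aux:
  fixes S :: "'n::finite set"
  shows "\<And>L :: (real^'n) set. 0 \<in> L \<Longrightarrow> (\<forall>x\<in>L. \<forall>y\<in>L. x - y \<in> L) \<Longrightarrow> L \<subseteq> int_points \<Longrightarrow>
     (\<forall>x\<in>L. \<forall>i. i \<notin> S \<longrightarrow> x$i = 0) \<Longrightarrow>
     \<exists>B. finite B \<and> independent B \<and> B \<subseteq> L \<and> L = {(\<Sum>v\<in>B. of_int (c v) *\<^sub>R v) | c. True}"
  using finite[of S]
proof (induction S rule: finite_induct)
  case empty
  then have "L = {0}" by (auto simp: vec_eq_iff)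
  moreover have "{(\<Sum>v\<in>{}. of_int (c v) *\<^sub>R v) | c :: real^'n \<Rightarrow> int. True} = {0}" by simp
  ultimately show ?case
    by (intro exI[of _ "{}"] conjI) (simp_all add: independent_empty)
next
  case (insert i S L)
  note z = insert.prems(1) and d = insert.prems(2)
  define L' where "L' = {x\<in>L. x$i = 0}"
  have "\<exists>B. finite B \<and> independent B \<and> B \<subseteq> L' \<and> L' = {(\<Sum>v\<in>B. of_int (c v) *\<^sub>R v) | c. True}"
    by (rule insert.IH) (use insert.prems in \<open>auto simp: L'_def\<close>)
  then obtain B' where B': "finite B'" "independent B'" "B' \<subseteq> L'"
    "L' = {(\<Sum>v\<in>B'. of_int (c v) *\<^sub>R v) | c. True}" by blast
  show ?case
  proof (cases "\<forall>x\<in>L. x$i = 0")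
    case True
    then have "L = L'" by (auto simp: L'_def)
    then show ?thesis using B' by blast
  next
    case False
    then obtain x1 where x1: "x1 \<in> L" "x1$i \<noteq> 0" by blast
    have intL: "x$j \<in> \<int>" if "x \<in> L" for x j using insert.prems(3) that by (auto simp: int_points_def)
    define P where "P = {n::nat. n > 0 \<and> (\<exists>x\<in>L. x$i = real n)}"
    have "P \<noteq> {}"
    proof -
      obtain m where m: "x1$i = of_int m" using intL[OF x1(1)] Ints_cases by metis
      show ?thesis
      proof (cases "m > 0")
        case True
        then have "nat m \<in> P" using x1 m by (auto simp: P_def intro!: bexI[of _ x1])
        then show ?thesis by auto
      next
        case False
        then have mneg: "m < 0" using m x1 by auto
        have "0 - x1 \<in> L" using z d x1 by blast
        moreover have "(0 - x1)$i = real (nat (-m))" using m mneg by simp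
        ultimately have "nat (-m) \<in> P" using mneg by (auto simp: P_def intro!: bexI[of _ "0 - x1"])
        then show ?thesis by auto
      qed
    qed
    define dd where "dd = (LEAST n. n \<in> P)"
    have ddP: "dd \<in> P" unfolding dd_def using \<open>P \<noteq> {}\<close> by (metis LeastI ex_in_conv)
    have ddmin: "\<And>n. n \<in> P \<Longrightarrow> dd \<le> n" unfolding dd_def by (rule Least_le)
    obtain v where v: "v \<in> L" "v$i = real dd" and ddpos: "dd > 0" using ddP by (auto simp: P_def)
    have decomp: "\<exists>q::int. x - of_int q *\<^sub>R v \<in> L'" if x: "x \<in> L" for x
    proof -
      obtain m where m: "x$i = of_int m" using intL[OF x] Ints_cases by metis
      define q where "q = m div int dd"
      define r where "r = m mod int dd"
      have mr: "m = q * int dd + r" by (simp add: q_def r_def)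
      have r0: "0 \<le> r" "r < int dd" using ddpos by (simp_all add: r_def)
      have inL: "x - of_int q *\<^sub>R v \<in> L" using d x grp_mult[OF z d v(1)] by blast
      have ri: "(x - of_int q *\<^sub>R v)$i = of_int r"
        using m v(2) mr by (simp add: algebra_simps)
      have "r = 0"
      proof (rule ccontr)
        assume "r \<noteq> 0"
        then have "nat r \<in> P" using r0 inL ri by (auto simp: P_def intro!: bexI[of _ "x - of_int q *\<^sub>R v"])
        then have "dd \<le> nat r" by (rule ddmin)
        then show False using r0 by linarith
      qed
      then show ?thesis using inL ri by (auto simp: L'_def)
    qed
    have vB': "v \<notin> span B'"
    proof
      assume "v \<in> span B'"
      moreover have "span B' \<subseteq> {x. x$i = 0}"
        by (rule span_minimal) (use B'(3) in \<open>auto simp: L'_def subspace_def\<close>)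
      ultimately show False using v ddpos by auto
    qed
    then have vnB': "v \<notin> B'" using span_base by blast
    have ind: "independent (insert v B')" using B'(2) vB' by (simp add: independent_insert)
    have eqL: "L = {(\<Sum>u\<in>insert v B'. of_int (c u) *\<^sub>R u) | c. True}"
    proof (intro set_eqI iffI)
      fix x assume x: "x \<in> L"
      obtain q where q: "x - of_int q *\<^sub>R v \<in> L'" using decomp[OF x] by blast
      then obtain c' where c': "x - of_int q *\<^sub>R v = (\<Sum>u\<in>B'. of_int (c' u) *\<^sub>R u)" using B'(4) by blast
      define c where "c = c'(v := q)"
      have "(\<Sum>u\<in>insert v B'. of_int (c u) *\<^sub>R u) = of_int q *\<^sub>R v + (\<Sum>u\<in>B'. of_int (c' u) *\<^sub>R u)"
        using B'(1) vnB' by (simp add: c_def) (rule sum.cong, auto)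
      also have "\<dots> = x" using c' by (simp add: algebra_simps)
      finally show "x \<in> {(\<Sum>u\<in>insert v B'. of_int (c u) *\<^sub>R u) | c. True}" by (auto intro!: exI[of _ c])
    next
      fix x assume "x \<in> {(\<Sum>u\<in>insert v B'. of_int (c u) *\<^sub>R u) | c. True}"
      then obtain c where c: "x = (\<Sum>u\<in>insert v B'. of_int (c u) *\<^sub>R u)" by blast
      have "x = of_int (c v) *\<^sub>R v + (\<Sum>u\<in>B'. of_int (c u) *\<^sub>R u)"
        using c B'(1) vnB' by simp
      moreover have "(\<Sum>u\<in>B'. of_int (c u) *\<^sub>R u) \<in> L" using B'(4) by (auto simp: L'_def)
      moreover have "of_int (c v) *\<^sub>R v \<in> L" using grp_mult[OF z d v(1)] .
      ultimately show "x \<in> L" using grp_add[OF z d] by simp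
    qed
    show ?thesis
      using B'(1,3) ind eqL v(1) by (intro exI[of _ "insert v B'"]) (auto simp: L'_def)
  qed
qed

lemma span_int_step:
  fixes K :: "(real^'n::finite) set"
  assumes sK: "subspace K" and spK: "span (K \<inter> int_points) = K" and r: "\<forall>e. r$e \<in> \<int>"
  shows "span ({x\<in>K. r \<bullet> x = 0} \<inter> int_points) = {x\<in>K. r \<bullet> x = 0}"
proof
  have sK': "subspace {x\<in>K. r \<bullet> x = 0}"
    using sK unfolding subspace_def by (auto simp: inner_add_right)
  show "span ({x\<in>K. r \<bullet> x = 0} \<inter> int_points) \<subseteq> {x\<in>K. r \<bullet> x = 0}"
    by (rule span_minimal[OF _ sK']) auto
next
  have rint: "r \<bullet> y \<in> \<int>" if "y \<in> int_points" for y
    using that r unfolding inner_vec_def int_points_def by (auto intro!: Ints_sum Ints_mult)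
  show "{x\<in>K. r \<bullet> x = 0} \<subseteq> span ({x\<in>K. r \<bullet> x = 0} \<inter> int_points)"
  proof
    fix x assume x: "x \<in> {x\<in>K. r \<bullet> x = 0}"
    show "x \<in> span ({x\<in>K. r \<bullet> x = 0} \<inter> int_points)"
    proof (cases "\<forall>s\<in>K \<inter> int_points. r \<bullet> s = 0")
      case True
      then have "K \<inter> int_points \<subseteq> {x\<in>K. r \<bullet> x = 0} \<inter> int_points" by auto
      then have "span (K \<inter> int_points) \<subseteq> span ({x\<in>K. r \<bullet> x = 0} \<inter> int_points)" by (rule span_mono)
      then show ?thesis using x spK by auto
    next
      case False
      then obtain s0 where s0: "s0 \<in> K" "s0 \<in> int_points" "r \<bullet> s0 \<noteq> 0" by blast
      define T where "T y = (r \<bullet> s0) *\<^sub>R y - (r \<bullet> y) *\<^sub>R s0" for y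
      have lT: "linear T" unfolding T_def
        by (rule linearI) (simp_all add: algebra_simps inner_add_right)
      have TK: "T ` (K \<inter> int_points) \<subseteq> {x\<in>K. r \<bullet> x = 0} \<inter> int_points"
      proof
        fix z assume "z \<in> T ` (K \<inter> int_points)"
        then obtain y where y: "y \<in> K" "y \<in> int_points" "z = T y" by blast
        have "T y \<in> K" unfolding T_def using sK y s0 by (simp add: subspace_diff subspace_scale)
        moreover have "r \<bullet> T y = 0" unfolding T_def by (simp add: inner_diff_right)
        moreover have "T y \<in> int_points"
          using y(2) s0(2) rint[OF y(2)] rint[OF s0(2)] unfolding T_def int_points_def
          by (auto intro!: Ints_diff Ints_mult)
        ultimately show "z \<in> {x\<in>K. r \<bullet> x = 0} \<inter> int_points" using y by simp
      qed
      have "x \<in> span (K \<inter> int_points)" using x spK by auto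
      then have "T x \<in> T ` span (K \<inter> int_points)" by blast
      also have "\<dots> = span (T ` (K \<inter> int_points))" using span_linear_image[OF lT] by simp
      also have "\<dots> \<subseteq> span ({x\<in>K. r \<bullet> x = 0} \<inter> int_points)" by (rule span_mono[OF TK])
      finally have Tx: "T x \<in> span ({x\<in>K. r \<bullet> x = 0} \<inter> int_points)" .
      have "x = (1 / (r \<bullet> s0)) *\<^sub>R T x" using x s0(3) by (simp add: T_def)
      then show ?thesis using span_mul[OF Tx] by metis
    qed
  qed
qed

lemma span_int_UNIV: "span (int_points :: (real^'n::finite) set) = UNIV"
proof -
  { fix x :: "real^'n"
    have "x = (\<Sum>i\<in>UNIV. (x$i) *\<^sub>R axis i 1)" using basis_expansion[of x] by (simp add: scalar_mult_eq_scaleR)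
    moreover have "(\<Sum>i\<in>UNIV. (x$i) *\<^sub>R axis i 1) \<in> span int_points"
      by (intro span_sum span_mul span_base) (auto simp: int_points_def axis_def)
    ultimately have "x \<in> span int_points" by simp }
  then show ?thesis by auto
qed

lemma span_ker_int:
  fixes vert :: "'e::finite \<times> bool \<Rightarrow> 'v::finite"
  shows "span (vp vert -` {0} \<inter> int_points) = vp vert -` {0}"
proof -
  define r where "r v = (\<chi> e. real (card {s. vert (e, s) = v}))" for v
  have vpr: "vp vert x $ v = r v \<bullet> x" for x v by (simp add: vp_def r_def inner_vec_def)
  have "\<forall>S::'v set. finite S \<longrightarrow> subspace {x. \<forall>v\<in>S. vp vert x $ v = 0} \<and>
     span ({x. \<forall>v\<in>S. vp vert x $ v = 0} \<inter> int_points) = {x. \<forall>v\<in>S. vp vert x $ v = 0}"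
  proof (intro allI impI)
    fix S :: "'v set" assume "finite S"
    then show "subspace {x. \<forall>v\<in>S. vp vert x $ v = 0} \<and>
     span ({x. \<forall>v\<in>S. vp vert x $ v = 0} \<inter> int_points) = {x. \<forall>v\<in>S. vp vert x $ v = 0}"
    proof (induction S rule: finite_induct)
      case empty then show ?case using span_int_UNIV by simp
    next
      case (insert v S)
      have eq: "{x. \<forall>w\<in>insert v S. vp vert x $ w = 0} = {x \<in> {x. \<forall>w\<in>S. vp vert x $ w = 0}. r v \<bullet> x = 0}"
        by (auto simp: vpr)
      have sub: "subspace {x. \<forall>w\<in>insert v S. vp vert x $ w = 0}"
        unfolding eq using conjunct1[OF insert.IH] unfolding subspace_def by (auto simp: inner_add_right)
      have rv: "\<forall>e. r v $ e \<in> \<int>" by (simp add: r_def)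
      have sp: "span ({x \<in> {x. \<forall>w\<in>S. vp vert x $ w = 0}. r v \<bullet> x = 0} \<inter> int_points)
          = {x \<in> {x. \<forall>w\<in>S. vp vert x $ w = 0}. r v \<bullet> x = 0}"
        by (rule span_int_step[OF conjunct1[OF insert.IH] conjunct2[OF insert.IH] rv])
      show ?case unfolding eq using sub sp unfolding eq by (rule conjI)
    qed
  qed
  moreover have fin: "finite (UNIV :: 'v set)" by simp
  ultimately have "span ({x. \<forall>v\<in>UNIV. vp vert x $ v = 0} \<inter> int_points) = {x. \<forall>v\<in>UNIV. vp vert x $ v = 0}"
    by blast
  moreover have "{x. \<forall>v\<in>UNIV. vp vert x $ v = 0} = vp vert -` {0}" by (auto simp: vec_eq_iff)
  ultimately show ?thesis by simp
qed


lemma int_points_diff: "x \<in> int_points \<Longrightarrow> y \<in> int_points \<Longrightarrow> x - y \<in> int_points"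
  by (auto simp: int_points_def)

lemma vp_axis: "vp vert (axis e 1) = axis (vert (e,True)) 1 + axis (vert (e,False)) 1"
proof -
  have "vp vert (axis e 1) $ v = (axis (vert (e,True)) 1 + axis (vert (e,False)) 1) $ v" for v
  proof -
    have "vp vert (axis e 1) $ v = (\<Sum>e'\<in>UNIV. if e' = e then real (card {s. vert (e, s) = v}) else 0)"
      unfolding vp_comp by (rule sum.cong) (auto simp: axis_def)
    also have "\<dots> = real (card {s. vert (e, s) = v})" by simp
    finally show ?thesis by (auto simp: card_half axis_def)
  qed
  then show ?thesis by (simp add: vec_eq_iff)
qed

lemma int_preimage:
  fixes vert :: "'e::finite \<times> bool \<Rightarrow> 'v::finite"
  assumes conn: "graph_connected vert" and nb: "\<not> bipartite vert"
    and bi: "\<forall>v. b$v \<in> \<int>" and bk: "(\<Sum>v\<in>UNIV. b $ v) = 2 * of_int k"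
  shows "\<exists>w\<in>int_points. vp vert w = b"
proof -
  define M where "M = {m. \<exists>w\<in>int_points. vp vert w = m}"
  have z: "0 \<in> M" unfolding M_def
    by (rule CollectI, rule bexI[of _ 0]) (auto simp: int_points_def linear_0[OF linear_vp])
  have d: "\<forall>x\<in>M. \<forall>y\<in>M. x - y \<in> M"
  proof (intro ballI)
    fix x y assume "x \<in> M" "y \<in> M"
    then obtain wx wy where w: "wx \<in> int_points" "vp vert wx = x" "wy \<in> int_points" "vp vert wy = y"
      by (auto simp: M_def)
    have "vp vert (wx - wy) = vp vert wx - vp vert wy" by (rule linear_diff[OF linear_vp])
    then have "vp vert (wx - wy) = x - y" using w by simp
    moreover have "wx - wy \<in> int_points" using w by (simp add: int_points_diff)
    ultimately show "x - y \<in> M" unfolding M_def by blast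
  qed
  define dl :: "'v \<Rightarrow> real^'v" where "dl x = axis x 1" for x
  have edge: "dl (vert (e,True)) + dl (vert (e,False)) \<in> M" for e
  proof -
    have "axis e 1 \<in> int_points" by (auto simp: int_points_def axis_def)
    moreover have "vp vert (axis e 1) = dl (vert (e,True)) + dl (vert (e,False))"
      by (simp add: vp_axis dl_def)
    ultimately show ?thesis unfolding M_def by blast
  qed
  fix u0 :: 'v
  have PN: "dl x - dl u0 \<in> M \<or> dl x + dl u0 \<in> M" for x
  proof -
    have "(u0, x) \<in> (edge_rel vert UNIV)\<^sup>*" using conn by (simp add: graph_connected_def)
    then show ?thesis
    proof (induction rule: rtrancl_induct)
      case base then show ?case using z by simp
    next
      case (step y x)
      from step(2) obtain e where e: "(y = vert (e,True) \<and> x = vert (e,False)) \<or> (x = vert (e,True) \<and> y = vert (e,False))"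
        by (auto simp: edge_rel_iff)
      have yx: "dl y + dl x \<in> M"
      proof (cases "y = vert (e,True) \<and> x = vert (e,False)")
        case True then show ?thesis using edge[of e] by simp
      next
        case False
        then have "x = vert (e,True)" "y = vert (e,False)" using e by auto
        then have "dl y + dl x = dl (vert (e,True)) + dl (vert (e,False))" by (simp add: add.commute)
        then show ?thesis using edge[of e] by simp
      qed
      show ?case
      proof (cases "dl y - dl u0 \<in> M")
        case True
        have "(dl y + dl x) - (dl y - dl u0) \<in> M" using d yx True by blast
        then show ?thesis by (simp add: algebra_simps)
      next
        case False
        then have "dl y + dl u0 \<in> M" using step.IH by blast
        then have "(dl y + dl x) - (dl y + dl u0) \<in> M" using d yx by blast
        then show ?thesis by (simp add: algebra_simps)
      qed
    qed
  qed
  have two: "dl u0 + dl u0 \<in> M"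
  proof (rule ccontr)
    assume n2: "dl u0 + dl u0 \<notin> M"
    have ex: "\<not> (dl x - dl u0 \<in> M \<and> dl x + dl u0 \<in> M)" for x
    proof
      assume h: "dl x - dl u0 \<in> M \<and> dl x + dl u0 \<in> M"
      then have "(dl x + dl u0) - (dl x - dl u0) \<in> M" using d by blast
      then show False using n2 by (simp add: algebra_simps)
    qed
    define I where "I = {x. dl x - dl u0 \<in> M}"
    define J where "J = {x. dl x + dl u0 \<in> M}"
    have "proper_2col vert UNIV UNIV I J"
      unfolding proper_2col_def ends_def fst_conv snd_conv
    proof (intro conjI ballI impI)
      show "I \<union> J = UNIV" using PN by (auto simp: I_def J_def)
      show "I \<inter> J = {}" using ex by (auto simp: I_def J_def)
    next
      fix e :: 'e
      let ?s = "vert (e,True)" and ?t = "vert (e,False)"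
      have st: "dl ?s + dl ?t \<in> M" by (rule edge)
      have 1: "dl ?t + dl u0 \<in> M" if "dl ?s - dl u0 \<in> M"
      proof -
        have "(dl ?s + dl ?t) - (dl ?s - dl u0) \<in> M" using d st that by blast
        then show ?thesis by (simp add: algebra_simps)
      qed
      have 2: "dl ?t - dl u0 \<in> M" if "dl ?s + dl u0 \<in> M"
      proof -
        have "(dl ?s + dl ?t) - (dl ?s + dl u0) \<in> M" using d st that by blast
        then show ?thesis by (simp add: algebra_simps)
      qed
      show "?s \<in> I \<and> ?t \<in> J \<or> ?s \<in> J \<and> ?t \<in> I"
        using PN[of ?s] 1 2 by (auto simp: I_def J_def)
    qed
    then show False using nb by (auto simp: bipartite_def)
  qed
  have all: "dl x - dl u0 \<in> M" for x
  proof (cases "dl x - dl u0 \<in> M")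
    case False
    then have "dl x + dl u0 \<in> M" using PN by blast
    then have "(dl x + dl u0) - (dl u0 + dl u0) \<in> M" using d two by blast
    then show ?thesis by (simp add: algebra_simps)
  qed
  define fl where "fl v = \<lfloor>b $ v\<rfloor>" for v
  have fl: "of_int (fl v) = b $ v" for v using bi by (auto simp: fl_def elim: Ints_cases)
  define m where "m = (\<Sum>v\<in>UNIV. of_int (fl v) *\<^sub>R (dl v - dl u0)) + of_int k *\<^sub>R (dl u0 + dl u0)"
  have m1: "(\<Sum>v\<in>UNIV. of_int (fl v) *\<^sub>R (dl v - dl u0)) \<in> M"
    by (rule grp_sum[OF z d]) (rule grp_mult[OF z d all])
  have m2: "of_int k *\<^sub>R (dl u0 + dl u0) \<in> M" by (rule grp_mult[OF z d two])
  have "m \<in> M" unfolding m_def by (rule grp_add[OF z d m1 m2])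
  moreover have "m = b"
  proof -
    have "m $ y = b $ y" for y
    proof -
      have "m $ y = (\<Sum>v\<in>UNIV. b $ v * (if y = v then 1 else 0)) - (\<Sum>v\<in>UNIV. b $ v) * (if y = u0 then 1 else 0)
           + of_int k * (2 * (if y = u0 then 1 else 0))"
        by (simp add: m_def fl dl_def axis_def right_diff_distrib sum_subtractf sum_distrib_right)
      also have "\<dots> = b $ y" using bk by (simp add: if_distrib cong: if_cong)
      finally show ?thesis .
    qed
    then show ?thesis by (simp add: vec_eq_iff)
  qed
  ultimately have "b \<in> M" by simp
  then show ?thesis unfolding M_def by simp
qed

lemma int_necessary:
  fixes vert :: "'e::finite \<times> bool \<Rightarrow> 'v::finite"
  assumes w: "w \<in> int_points" and wb: "vp vert w = b"
  shows "(\<forall>v. b$v \<in> \<int>) \<and> (\<exists>k::int. (\<Sum>v\<in>UNIV. b $ v) = 2 * of_int k)"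
proof
  have wi: "w $ e \<in> \<int>" for e using w by (simp add: int_points_def)
  show "\<forall>v. b$v \<in> \<int>"
    using wi by (auto simp: wb[symmetric] vp_comp intro!: Ints_sum Ints_mult)
  have "(\<Sum>v\<in>UNIV. b $ v) = (\<Sum>v\<in>UNIV. (\<lambda>_. 1) v * vp vert w $ v)" by (simp add: wb)
  also have "\<dots> = (\<Sum>e\<in>UNIV. w$e * 2)" by (subst sum_vp) simp
  also have "\<dots> = 2 * (\<Sum>e\<in>UNIV. w$e)" by (simp add: sum_distrib_left mult.commute)
  finally have s: "(\<Sum>v\<in>UNIV. b $ v) = 2 * (\<Sum>e\<in>UNIV. w$e)" .
  obtain k where "(\<Sum>e\<in>UNIV. w$e) = of_int k" using Ints_sum[of UNIV "\<lambda>e. w$e"] wi by (metis Ints_cases)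
  then show "\<exists>k::int. (\<Sum>v\<in>UNIV. b $ v) = 2 * of_int k" using s by auto
qed


lemma fiber_eq:
  assumes "vp vert w0 = b"
  shows "vp vert -` {b} = (+) w0 ` (vp vert -` {0})"
proof (intro set_eqI iffI)
  fix x assume "x \<in> vp vert -` {b}"
  moreover have "vp vert (x - w0) = vp vert x - vp vert w0" by (rule linear_diff[OF linear_vp])
  ultimately have "vp vert (x - w0) = 0" using assms by simp
  then show "x \<in> (+) w0 ` (vp vert -` {0})" by (auto intro!: image_eqI[of _ _ "x - w0"])
next
  fix x assume "x \<in> (+) w0 ` (vp vert -` {0})"
  then obtain z where z: "x = w0 + z" "vp vert z = 0" by auto
  moreover have "vp vert (w0 + z) = vp vert w0 + vp vert z" by (rule linear_add[OF linear_vp])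
  ultimately show "x \<in> vp vert -` {b}" using assms by simp
qed

lemma lattice_part:
  fixes vert :: "'e::finite \<times> bool \<Rightarrow> 'v::finite"
  assumes conn: "graph_connected vert" and nb: "\<not> bipartite vert"
    and bi: "\<forall>v. b$v \<in> \<int>" and bk: "(\<Sum>v\<in>UNIV. b $ v) = 2 * of_int k"
  shows "lattice_in (vp vert -` {b} \<inter> int_points) (vp vert -` {b})"
proof -
  obtain x0 where x0: "x0 \<in> int_points" "vp vert x0 = b" using int_preimage[OF conn nb bi bk] by blast
  define L where "L = vp vert -` {0} \<inter> int_points"
  have z: "0 \<in> L" by (auto simp: L_def int_points_def linear_0[OF linear_vp])
  have d: "\<forall>x\<in>L. \<forall>y\<in>L. x - y \<in> L"
    by (auto simp: L_def linear_diff[OF linear_vp] int_points_diff)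
  have Lint: "L \<subseteq> int_points" by (simp add: L_def)
  have Lsup: "\<forall>x\<in>L. \<forall>i. i \<notin> (UNIV :: 'e set) \<longrightarrow> x$i = 0" by simp
  from lattice_basis_aux[where S="UNIV :: 'e set", OF z d Lint Lsup]
  obtain B where B: "finite B" "independent B" "B \<subseteq> L" "L = {(\<Sum>v\<in>B. of_int (c v) *\<^sub>R v) | c. True}"
    by (elim exE conjE)
  have tr: "(\<lambda>y. y - x0) ` (vp vert -` {b}) = vp vert -` {0}"
    using fiber_eq[OF x0(2)] by (auto simp: image_iff)
  have sp: "span B = vp vert -` {0}"
  proof
    show "span B \<subseteq> vp vert -` {0}"
      by (rule span_minimal) (use B(3) subspace_ker in \<open>auto simp: L_def\<close>)
    have "L \<subseteq> span B"
    proof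
      fix x assume "x \<in> L"
      then obtain c where "x = (\<Sum>v\<in>B. of_int (c v) *\<^sub>R v)" using B(4) by blast
      moreover have "(\<Sum>v\<in>B. of_int (c v) *\<^sub>R v) \<in> span B"
        by (rule span_sum, rule span_mul, rule span_base)
      ultimately show "x \<in> span B" by simp
    qed
    then have "span L \<subseteq> span B" by (metis span_minimal subspace_span)
    then show "vp vert -` {0} \<subseteq> span B" using span_ker_int[of vert] by (simp add: L_def)
  qed
  have eq: "vp vert -` {b} \<inter> int_points = {x0 + (\<Sum>v\<in>B. of_int (c v) *\<^sub>R v) | c. True}"
  proof (intro set_eqI iffI)
    fix x assume x: "x \<in> vp vert -` {b} \<inter> int_points"
    then have "x - x0 \<in> L" using x0 by (auto simp: L_def linear_diff[OF linear_vp] int_points_diff)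
    then obtain c where "x - x0 = (\<Sum>v\<in>B. of_int (c v) *\<^sub>R v)" using B(4) by blast
    then have "x = x0 + (\<Sum>v\<in>B. of_int (c v) *\<^sub>R v)" by (simp add: algebra_simps)
    then show "x \<in> {x0 + (\<Sum>v\<in>B. of_int (c v) *\<^sub>R v) | c. True}" by blast
  next
    fix x assume "x \<in> {x0 + (\<Sum>v\<in>B. of_int (c v) *\<^sub>R v) | c. True}"
    then obtain c where c: "x = x0 + (\<Sum>v\<in>B. of_int (c v) *\<^sub>R v)" by blast
    then have l: "(\<Sum>v\<in>B. of_int (c v) *\<^sub>R v) \<in> L" using B(4) by blast
    then have "vp vert x = b" using c x0 by (simp add: L_def linear_add[OF linear_vp])
    moreover have "x \<in> int_points" using l x0(1) c by (auto simp: L_def int_points_def)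
    ultimately show "x \<in> vp vert -` {b} \<inter> int_points" by simp
  qed
  have x0f: "x0 \<in> vp vert -` {b}" using x0 by simp
  have sp2: "span B = (\<lambda>y. y - x0) ` (vp vert -` {b})" using sp tr by simp
  show ?thesis unfolding lattice_in_def
    apply (rule exI[of _ x0], rule exI[of _ B])
    apply (intro conjI)
    by (rule x0f | rule B(1) | rule B(2) | rule sp2 | rule eq)+
qed

theorem lemma3p4:
  fixes kappa :: "nat multiset" and g :: nat
    and rho :: "'e::finite \<times> bool \<Rightarrow> 'e \<times> bool" and vert :: "'e \<times> bool \<Rightarrow> 'v::finite"
  assumes "\<forall>k\<in>#kappa. odd k"
    and "in_RG kappa g rho vert"
    and "\<not> bipartite vert"
  shows "surj (vp vert) \<and>
    (\<forall>b. affine (vp vert -` {b}) \<and> aff_dim (vp vert -` {b}) = int CARD('e) - int CARD('v)) \<and>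
    (\<forall>b e. static_edge vert e \<longrightarrow> (\<forall>w\<in>vp vert -` {b}. w $ e = f_e vert e b)) \<and>
    (\<forall>b e. \<not> static_edge vert e \<longrightarrow> \<not> (\<exists>c. \<forall>w\<in>vp vert -` {b}. w $ e = c)) \<and>
    (\<forall>b. (\<forall>v. b $ v \<in> \<int>) \<and> (\<exists>k::int. (\<Sum>v\<in>UNIV. b $ v) = 2 * of_int k) \<longrightarrow>
            lattice_in (vp vert -` {b} \<inter> int_points) (vp vert -` {b})) \<and>
    (\<forall>b. \<not> ((\<forall>v. b $ v \<in> \<int>) \<and> (\<exists>k::int. (\<Sum>v\<in>UNIV. b $ v) = 2 * of_int k)) \<longrightarrow>
            vp vert -` {b} \<inter> int_points = {})"
proof -
  have conn: "graph_connected vert" using assms(2) by (simp add: in_RG_def)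
  note nb = assms(3)
  have P1: "surj (vp vert)" by (rule surj_vp[OF conn nb])
  have P2: "affine (vp vert -` {b}) \<and> aff_dim (vp vert -` {b}) = int CARD('e) - int CARD('v)" for b
  proof
    show "affine (vp vert -` {b})"
      unfolding affine_def
    proof (intro ballI allI impI)
      fix x y u v assume x: "x \<in> vp vert -` {b}" and y: "y \<in> vp vert -` {b}" and uv: "(u::real) + v = 1"
      have "vp vert (u *\<^sub>R x + v *\<^sub>R y) = u *\<^sub>R vp vert x + v *\<^sub>R vp vert y"
        by (simp add: linear_add[OF linear_vp] linear_scale[OF linear_vp])
      also have "\<dots> = (u + v) *\<^sub>R b" using x y by (simp add: scaleR_left_distrib)
      also have "\<dots> = b" using uv by simp
      finally show "u *\<^sub>R x + v *\<^sub>R y \<in> vp vert -` {b}" by simp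
    qed
    obtain w0 where w0: "vp vert w0 = b" using P1 by (metis surjD)
    have "aff_dim (vp vert -` {b}) = aff_dim (vp vert -` {0})"
      by (simp add: fiber_eq[OF w0] aff_dim_translation_eq)
    also have "\<dots> = int (dim (vp vert -` {0}))" by (rule aff_dim_subspace[OF subspace_ker])
    also have "\<dots> = int CARD('e) - int CARD('v)" using dim_ker[OF conn nb] by linarith
    finally show "aff_dim (vp vert -` {b}) = int CARD('e) - int CARD('v)" .
  qed
  have P3: "\<forall>b e. static_edge vert e \<longrightarrow> (\<forall>w\<in>vp vert -` {b}. w $ e = f_e vert e b)"
  proof (intro allI impI ballI)
    fix b :: "real^'v" and e w assume "static_edge vert e" "w \<in> vp vert -` {b}"
    then show "w $ e = f_e vert e b" using static_const[OF conn nb, of e w b] by simp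
  qed
  have P4: "\<forall>b e. \<not> static_edge vert e \<longrightarrow> \<not> (\<exists>c. \<forall>w\<in>vp vert -` {b}. w $ e = c)"
  proof (intro allI impI)
    fix b :: "real^'v" and e assume "\<not> static_edge vert e"
    then show "\<not> (\<exists>c. \<forall>w\<in>vp vert -` {b}. w $ e = c)" by (rule nonstatic_nonconst[OF conn nb])
  qed
  have P5: "\<forall>b. (\<forall>v. b $ v \<in> \<int>) \<and> (\<exists>k::int. (\<Sum>v\<in>UNIV. b $ v) = 2 * of_int k) \<longrightarrow>
            lattice_in (vp vert -` {b} \<inter> int_points) (vp vert -` {b})"
  proof (intro allI impI)
    fix b :: "real^'v" assume h: "(\<forall>v. b $ v \<in> \<int>) \<and> (\<exists>k::int. (\<Sum>v\<in>UNIV. b $ v) = 2 * of_int k)"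
    then obtain k where k: "(\<Sum>v\<in>UNIV. b $ v) = 2 * of_int k" by (elim conjE exE)
    from h have bi: "\<forall>v. b $ v \<in> \<int>" by (rule conjunct1)
    show "lattice_in (vp vert -` {b} \<inter> int_points) (vp vert -` {b})"
      by (rule lattice_part[OF conn nb bi k])
  qed
  have P6: "\<forall>b. \<not> ((\<forall>v. b $ v \<in> \<int>) \<and> (\<exists>k::int. (\<Sum>v\<in>UNIV. b $ v) = 2 * of_int k)) \<longrightarrow>
            vp vert -` {b} \<inter> int_points = {}"
  proof (intro allI impI)
    fix b :: "real^'v" assume h: "\<not> ((\<forall>v. b $ v \<in> \<int>) \<and> (\<exists>k::int. (\<Sum>v\<in>UNIV. b $ v) = 2 * of_int k))"
    show "vp vert -` {b} \<inter> int_points = {}"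
    proof (rule ccontr)
      assume "vp vert -` {b} \<inter> int_points \<noteq> {}"
      then obtain w where w: "w \<in> int_points" "vp vert w = b" by auto
      show False by (rule notE[OF h int_necessary[OF w]])
    qed
  qed
  have P2': "\<forall>b. affine (vp vert -` {b}) \<and> aff_dim (vp vert -` {b}) = int CARD('e) - int CARD('v)"
  proof
    fix b :: "real^'v" show "affine (vp vert -` {b}) \<and> aff_dim (vp vert -` {b}) = int CARD('e) - int CARD('v)" by (rule P2)
  qed
  show ?thesis
  proof (intro conjI)
  qed (fact P1 P2' P3 P4 P5 P6)+
qed

end
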